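(* Define subgroups $W_1 \subseteq \dots \subseteq W_p \subseteq W_{p+1} := W_{\mathfrak g}$ by $W_p = \operatorname{Stab}_{W_{\mathfrak g}}(U_p)$ and $W_{i-1} = \operatorname{Stab}_{W_i}(U_{i-1})$ for $i \in \{2,\dots,p\}$. Then $W_i = \operatorname{Stab}_{W_{i+1}}(\mathbf B_i)$ for all $i \in \{1,\dots,p\}$, and $(W_{\mathfrak g}Q) \cap \mathbf B = \mathcal O_Q$, where $\mathcal O_Q$ is the orbit of $Q$ under $W_1$.
   Context: $G$ is a connected complex reductive Lie group, $\mathfrak g = \mathrm{Lie}(G)$, $T\subseteq G$ a maximal torus, $\mathfrak t = \mathrm{Lie}(T)$, $\Phi_{\mathfrak g}$ the root system of $(\mathfrak g,\mathfrak t)$, $W_{\mathfrak g}$ the Weyl group acting on $\mathfrak t$. For $S \subseteq \mathfrak t$ and a subgroup $H \subseteq W_{\mathfrak g}$, $\operatorname{Stab}_H(S) = \{w \in H : w(S)\subseteq S\}$. Fix an integer $p \geq 1$ and $A_1,\dots,A_p \in \mathfrak t$, and let $Q = \sum_{i=1}^p A_i z^{-i}$, identified with $(A_1,\dots,A_p) \in \mathfrak t^p$, on which $W_{\mathfrak g}$ acts diagonally. For $\alpha \in \Phi_{\mathfrak g}$ let $d_\alpha = \max\{i : \alpha(A_i)\neq 0\}$ ($d_\alpha = 0$ if $\alpha(A_i)=0$ for all $i$). For $i \in \{1,\dots,p\}$ let $\Phi_{\mathfrak h_i} = \{\alpha : d_\alpha < i\}$ (the roots of the centraliser of $\{A_i,\dots,A_p\}$),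 $U_i = \bigcap_{\alpha \in \Phi_{\mathfrak h_i}}\ker(\alpha)$ (equal to $\mathfrak t$ if $\Phi_{\mathfrak h_i}$ is empty), and $$\mathbf B_i = \{X \in \mathfrak t : \alpha(X) = 0 \text{ whenever } d_\alpha < i, \ \alpha(X) \neq 0 \text{ whenever } d_\alpha = i\},$$ and $\mathbf B = \mathbf B_1 \times \dots \times \mathbf B_p \subseteq \mathfrak t^p$. *)

theory Defs
  imports "HOL-Analysis.Analysis"
begin

text \<open>The Cartan subalgebra t is modelled as complex^'n; its dual t* is identified with
complex^'n via the coordinate pairing below.\<close>

definition ev :: "complex^'n \<Rightarrow> complex^'n \<Rightarrow> complex" where
  "ev \<alpha> X = (\<Sum>i\<in>UNIV. \<alpha> $ i * X $ i)"

definition refl_t :: "(complex^'n \<Rightarrow> complex^'n) \<Rightarrow> complex^'n \<Rightarrow> complex^'n \<Rightarrow> complex^'n" where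
  "refl_t cor \<alpha> X = X - ev \<alpha> X *s cor \<alpha>"

text \<open>Dual reflection on t*: beta composed with s_alpha.\<close>
definition refl_dual :: "(complex^'n \<Rightarrow> complex^'n) \<Rightarrow> complex^'n \<Rightarrow> complex^'n \<Rightarrow> complex^'n" where
  "refl_dual cor \<alpha> \<beta> = \<beta> - ev \<beta> (cor \<alpha>) *s \<alpha>"

text \<open>Roots Phi of (g,t) together with coroots: the axioms of a (reduced) root datum over C.\<close>
definition root_datum :: "(complex^'n) set \<Rightarrow> (complex^'n \<Rightarrow> complex^'n) \<Rightarrow> bool" where
  "root_datum \<Phi> cor \<longleftrightarrow> finite \<Phi> \<and>
     (\<forall>\<alpha>\<in>\<Phi>. ev \<alpha> (cor \<alpha>) = 2 \<and>
        (\<forall>\<beta>\<in>\<Phi>. ev \<beta> (cor \<alpha>) \<in> \<int> \<and> refl_dual cor \<alpha> \<beta> \<in> \<Phi> \<and>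
                  cor (refl_dual cor \<alpha> \<beta>) = refl_t cor \<alpha> (cor \<beta>)) \<and>
        (\<forall>c. c *s \<alpha> \<in> \<Phi> \<longrightarrow> c = 1 \<or> c = -1))"

inductive_set weyl_group :: "(complex^'n) set \<Rightarrow> (complex^'n \<Rightarrow> complex^'n)
    \<Rightarrow> (complex^'n \<Rightarrow> complex^'n) set" for \<Phi> cor where
  weyl_id: "id \<in> weyl_group \<Phi> cor"
| weyl_step: "w \<in> weyl_group \<Phi> cor \<Longrightarrow> \<alpha> \<in> \<Phi> \<Longrightarrow> refl_t cor \<alpha> \<circ> w \<in> weyl_group \<Phi> cor"

definition Stab :: "('a \<Rightarrow> 'a) set \<Rightarrow> 'a set \<Rightarrow> ('a \<Rightarrow> 'a) set" where
  "Stab H S = {w \<in> H. w ` S \<subseteq> S}"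

text \<open>d_alpha for Q = sum A_i z^(-i), i = 1..p.\<close>
definition dd :: "nat \<Rightarrow> (nat \<Rightarrow> complex^'n) \<Rightarrow> complex^'n \<Rightarrow> nat" where
  "dd p A \<alpha> = Max ({0} \<union> {i \<in> {1..p}. ev \<alpha> (A i) \<noteq> 0})"

definition Uset :: "(complex^'n) set \<Rightarrow> nat \<Rightarrow> (nat \<Rightarrow> complex^'n) \<Rightarrow> nat \<Rightarrow> (complex^'n) set" where
  "Uset \<Phi> p A i = {X. \<forall>\<alpha>\<in>\<Phi>. dd p A \<alpha> < i \<longrightarrow> ev \<alpha> X = 0}"

definition Bset :: "(complex^'n) set \<Rightarrow> nat \<Rightarrow> (nat \<Rightarrow> complex^'n) \<Rightarrow> nat \<Rightarrow> (complex^'n) set" where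
  "Bset \<Phi> p A i = {X. \<forall>\<alpha>\<in>\<Phi>. (dd p A \<alpha> < i \<longrightarrow> ev \<alpha> X = 0) \<and> (dd p A \<alpha> = i \<longrightarrow> ev \<alpha> X \<noteq> 0)}"

end

theory Submission
  imports Defs
begin

lemma ev_diff2: "ev a (x - y) = ev a x - ev a y"
  unfolding ev_def by (simp add: right_diff_distrib sum_subtractf)
lemma ev_add2: "ev a (x + y) = ev a x + ev a y"
  unfolding ev_def by (simp add: distrib_left sum.distrib)
lemma ev_scale2: "ev a (c *s y) = c * ev a y"
  unfolding ev_def by (simp add: sum_distrib_left mult.left_commute)
lemma ev_diff1: "ev (x - y) a = ev x a - ev y a"
  unfolding ev_def by (simp add: left_diff_distrib sum_subtractf)
lemma ev_scale1: "ev (c *s y) a = c * ev y a"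
  unfolding ev_def by (simp add: sum_distrib_left mult.assoc)

lemma refl_dual_invol:
  assumes "ev \<beta> (cor \<beta>) = 2"
  shows "refl_dual cor \<beta> (refl_dual cor \<beta> \<gamma>) = \<gamma>"
proof -
  have "ev (\<gamma> - ev \<gamma> (cor \<beta>) *s \<beta>) (cor \<beta>) = - ev \<gamma> (cor \<beta>)"
    using assms by (simp add: ev_diff1 ev_scale1)
  then show ?thesis unfolding refl_dual_def
    by (simp add: vector_sadd_rdistrib algebra_simps)
qed

lemma ev_refl: "ev \<alpha> (refl_t cor \<beta> Y) = ev (refl_dual cor \<beta> \<alpha>) Y"
  unfolding refl_t_def refl_dual_def
  by (simp add: ev_diff1 ev_diff2 ev_scale1 ev_scale2 mult.commute)

lemma weyl_phi:
  assumes "root_datum \<Phi> cor" "w \<in> weyl_group \<Phi> cor"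
  shows "\<exists>f. f ` \<Phi> \<subseteq> \<Phi> \<and> inj_on f \<Phi> \<and> (\<forall>\<alpha>\<in>\<Phi>. \<forall>X. ev \<alpha> (w X) = ev (f \<alpha>) X)"
  using assms(2)
proof induction
  case weyl_id
  then show ?case by (intro exI[of _ id]) auto
next
  case (weyl_step w \<beta>)
  then obtain f where f: "f ` \<Phi> \<subseteq> \<Phi>" "inj_on f \<Phi>" "\<forall>\<alpha>\<in>\<Phi>. \<forall>X. ev \<alpha> (w X) = ev (f \<alpha>) X"
    by blast
  let ?r = "refl_dual cor \<beta>"
  have rPhi: "?r ` \<Phi> \<subseteq> \<Phi>" using assms(1) weyl_step.hyps(2) by (auto simp: root_datum_def)
  have two: "ev \<beta> (cor \<beta>) = 2" using assms(1) weyl_step.hyps(2) by (auto simp: root_datum_def)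
  have rinj: "inj_on ?r \<Phi>"
    by (metis inj_onI refl_dual_invol[of \<beta> cor, OF two])
  show ?case
  proof (intro exI[of _ "f \<circ> ?r"] conjI)
    show "(f \<circ> ?r) ` \<Phi> \<subseteq> \<Phi>" using rPhi f(1) by (auto simp: image_subset_iff)
    show "inj_on (f \<circ> ?r) \<Phi>"
      by (rule comp_inj_on[OF rinj inj_on_subset[OF f(2) rPhi]])
    show "\<forall>\<alpha>\<in>\<Phi>. \<forall>X. ev \<alpha> ((refl_t cor \<beta> \<circ> w) X) = ev ((f \<circ> ?r) \<alpha>) X"
      using f(3) rPhi by (auto simp: image_subset_iff ev_refl)
  qed
qed

lemma dd_ge: "j \<in> {1..p} \<Longrightarrow> ev \<alpha> (A j) \<noteq> 0 \<Longrightarrow> j \<le> dd p A \<alpha>"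
  unfolding dd_def by (intro Max_ge) auto

lemma dd_le: "dd p A \<alpha> \<le> p"
  unfolding dd_def by (subst Max_le_iff) auto

lemma dd_pos:
  assumes "dd p A \<alpha> \<ge> 1"
  shows "dd p A \<alpha> \<in> {1..p} \<and> ev \<alpha> (A (dd p A \<alpha>)) \<noteq> 0"
proof -
  let ?S = "{0} \<union> {i \<in> {1..p}. ev \<alpha> (A i) \<noteq> 0}"
  have "Max ?S \<in> ?S" by (intro Max_in) auto
  then show ?thesis using assms unfolding dd_def by auto
qed

lemma A_in_U:
  assumes "j \<in> {1..p}" "k \<le> j"
  shows "A j \<in> Uset \<Phi> p A k"
  unfolding Uset_def
proof (intro CollectI ballI impI)
  fix \<alpha> assume "\<alpha> \<in> \<Phi>" "dd p A \<alpha> < k"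
  show "ev \<alpha> (A j) = 0"
  proof (rule ccontr)
    assume "ev \<alpha> (A j) \<noteq> 0"
    then have "j \<le> dd p A \<alpha>" using dd_ge[OF assms(1)] by blast
    then show False using assms(2) \<open>dd p A \<alpha> < k\<close> by linarith
  qed
qed

lemma A_in_B:
  assumes "i \<in> {1..p}"
  shows "A i \<in> Bset \<Phi> p A i"
proof -
  have U: "A i \<in> Uset \<Phi> p A i" using A_in_U[OF assms] by blast
  have "ev \<alpha> (A i) \<noteq> 0" if "dd p A \<alpha> = i" for \<alpha>
  proof -
    have "dd p A \<alpha> \<ge> 1" using that assms by simp
    then show ?thesis using dd_pos[of p A \<alpha>] that by simp
  qed
  then show ?thesis using U unfolding Bset_def Uset_def by blast
qed

lemma preserve:
  assumes "f ` \<Phi> \<subseteq> \<Phi>" "\<forall>\<alpha>\<in>\<Phi>. \<forall>X. ev \<alpha> (w X) = ev (f \<alpha>) X"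
    "w ` Uset \<Phi> p A k \<subseteq> Uset \<Phi> p A k" "\<alpha> \<in> \<Phi>" "dd p A \<alpha> < k"
  shows "dd p A (f \<alpha>) < k"
proof (rule ccontr)
  assume "\<not> dd p A (f \<alpha>) < k"
  then have jk: "k \<le> dd p A (f \<alpha>)" by simp
  define j where "j = dd p A (f \<alpha>)"
  have "j \<ge> 1" using jk assms(5) j_def by simp
  then have j: "j \<in> {1..p}" "ev (f \<alpha>) (A j) \<noteq> 0" using dd_pos j_def by blast+
  have "A j \<in> Uset \<Phi> p A k" using A_in_U j(1) jk j_def by blast
  then have "w (A j) \<in> Uset \<Phi> p A k" using assms(3) by blast
  then have "ev \<alpha> (w (A j)) = 0" using assms(4,5) by (auto simp: Uset_def)
  then show False using assms(2,4) j(2) by simp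
qed

lemma perturb:
  assumes "i \<in> {1..p}" "X \<in> Uset \<Phi> p A i" "finite \<Phi>"
  shows "\<exists>t. X + t *s A i \<in> Bset \<Phi> p A i"
proof -
  let ?S = "(\<lambda>\<alpha>. - ev \<alpha> X / ev \<alpha> (A i)) ` \<Phi>"
  have "finite ?S" using assms(3) by simp
  then obtain t where t: "t \<notin> ?S"
    using ex_new_if_finite[OF infinite_UNIV_char_0] by blast
  have AU: "A i \<in> Uset \<Phi> p A i" using A_in_U assms(1) by blast
  show ?thesis
  proof (intro exI[of _ t])
    show "X + t *s A i \<in> Bset \<Phi> p A i"
      unfolding Bset_def
    proof (intro CollectI ballI conjI impI)
      fix \<alpha> assume a: "\<alpha> \<in> \<Phi>" "dd p A \<alpha> < i"
      then show "ev \<alpha> (X + t *s A i) = 0" using assms(2) AU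
        by (simp add: ev_add2 ev_scale2 Uset_def)
    next
      fix \<alpha> assume a: "\<alpha> \<in> \<Phi>" "dd p A \<alpha> = i"
      then have nz: "ev \<alpha> (A i) \<noteq> 0" using dd_pos assms(1) by fastforce
      show "ev \<alpha> (X + t *s A i) \<noteq> 0"
      proof
        assume "ev \<alpha> (X + t *s A i) = 0"
        then have "ev \<alpha> X + t * ev \<alpha> (A i) = 0" by (simp add: ev_add2 ev_scale2)
        then have "t = - ev \<alpha> X / ev \<alpha> (A i)" using nz by (simp add: field_simps add_eq_0_iff)
        then show False using t a by blast
      qed
    qed
  qed
qed

theorem lemma2p7:
  fixes \<Phi> :: "(complex^'n) set" and cor :: "complex^'n \<Rightarrow> complex^'n"
    and p :: nat and A :: "nat \<Rightarrow> complex^'n" and W :: "nat \<Rightarrow> (complex^'n \<Rightarrow> complex^'n) set"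
  assumes "root_datum \<Phi> cor" and "p \<ge> 1"
    and "W (p + 1) = weyl_group \<Phi> cor"
    and "\<forall>i\<in>{1..p}. W i = Stab (W (i + 1)) (Uset \<Phi> p A i)"
  shows "(\<forall>i\<in>{1..p}. W i = Stab (W (i + 1)) (Bset \<Phi> p A i)) \<and>
         (\<lambda>w. \<lambda>i\<in>{1..p}. w (A i)) ` weyl_group \<Phi> cor \<inter> PiE {1..p} (Bset \<Phi> p A)
           = (\<lambda>w. \<lambda>i\<in>{1..p}. w (A i)) ` W 1"
proof -
  note rd = assms(1)
  have finPhi: "finite \<Phi>" using rd by (simp add: root_datum_def)
  have Wmono: "W j \<subseteq> W (j+1)" if "j \<in> {1..p}" for j
    using assms(4) that by (auto simp: Stab_def)
  have Wchain0: "\<forall>k. j + k \<le> p + 1 \<longrightarrow> W j \<subseteq> W (j+k)" if "1 \<le> j" for j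
  proof
    fix k show "j + k \<le> p + 1 \<longrightarrow> W j \<subseteq> W (j+k)"
    proof (induction k)
      case 0 then show ?case by simp
    next
      case (Suc k)
      show ?case
      proof
        assume h: "j + Suc k \<le> p + 1"
        then have "W j \<subseteq> W (j+k)" using Suc by simp
        moreover have "W (j+k) \<subseteq> W (j+k+1)" using Wmono[of "j+k"] h that by simp
        ultimately show "W j \<subseteq> W (j + Suc k)" by simp
      qed
    qed
  qed
  have Wchain: "W j \<subseteq> W m" if "1 \<le> j" "j \<le> m" "m \<le> p+1" for j m
    using Wchain0[OF that(1), rule_format, of "m - j"] that by simp
  have Wweyl: "W j \<subseteq> weyl_group \<Phi> cor" if "j \<in> {1..p+1}" for j
    using Wchain[of j "p+1"] that assms(3) by simp
  have key: "(w ` Uset \<Phi> p A i \<subseteq> Uset \<Phi> p A i) \<longleftrightarrow> (w ` Bset \<Phi> p A i \<subseteq> Bset \<Phi> p A i)"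
    if i: "i \<in> {1..p}" and w: "w \<in> W (i+1)" for i w
  proof -
    have "i + 1 \<in> {1..p+1}" using i by simp
    then have "W (i+1) \<subseteq> weyl_group \<Phi> cor" by (rule Wweyl)
    then have "w \<in> weyl_group \<Phi> cor" using w by (rule subsetD)
    then obtain f where fPhi: "f ` \<Phi> \<subseteq> \<Phi>" and finj: "inj_on f \<Phi>"
      and fev: "\<forall>\<alpha>\<in>\<Phi>. \<forall>X. ev \<alpha> (w X) = ev (f \<alpha>) X"
      using weyl_phi[OF rd] by blast
    have upper: "dd p A (f \<alpha>) < i+1" if a: "\<alpha> \<in> \<Phi>" "dd p A \<alpha> < i+1" for \<alpha>
    proof (cases "i+1 \<le> p")
      case True
      then have "W (i+1) = Stab (W (i+1+1)) (Uset \<Phi> p A (i+1))" using assms(4) by simp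
      then have "w ` Uset \<Phi> p A (i+1) \<subseteq> Uset \<Phi> p A (i+1)" using w by (simp add: Stab_def)
      then show ?thesis using preserve[OF fPhi fev _ a] by blast
    next
      case False
      then show ?thesis using dd_le[of p A "f \<alpha>"] by simp
    qed
    show ?thesis
    proof
      assume U: "w ` Uset \<Phi> p A i \<subseteq> Uset \<Phi> p A i"
      show "w ` Bset \<Phi> p A i \<subseteq> Bset \<Phi> p A i"
      proof (rule image_subsetI)
        fix X assume X: "X \<in> Bset \<Phi> p A i"
        have XU: "X \<in> Uset \<Phi> p A i" using X by (auto simp: Bset_def Uset_def)
        have wXU: "w X \<in> Uset \<Phi> p A i" using U XU by auto
        have nz: "ev \<alpha> (w X) \<noteq> 0" if a: "\<alpha> \<in> \<Phi>" "dd p A \<alpha> = i" for \<alpha>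
        proof -
          have fa: "f \<alpha> \<in> \<Phi>" using fPhi a by auto
          have lt: "dd p A (f \<alpha>) < i+1" using upper a by simp
          have ge: "\<not> dd p A (f \<alpha>) < i"
          proof
            assume lt2: "dd p A (f \<alpha>) < i"
            let ?P = "{\<beta> \<in> \<Phi>. dd p A \<beta> < i}"
            have sub: "f ` ?P \<subseteq> ?P" using preserve[OF fPhi fev U] fPhi by auto
            have finP: "finite ?P" using finPhi by simp
            have injP: "inj_on f ?P" using finj by (rule inj_on_subset) auto
            have eq: "f ` ?P = ?P" using endo_inj_surj[OF finP sub injP] .
            have "f \<alpha> \<in> ?P" using lt2 fa by simp
            then have "f \<alpha> \<in> f ` ?P" using eq by simp
            then obtain \<gamma> where g: "\<gamma> \<in> ?P" "f \<gamma> = f \<alpha>" by (rule imageE) simp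
            then have "\<gamma> = \<alpha>" using finj a(1) by (auto simp: inj_on_def)
            then show False using g a by simp
          qed
          have "dd p A (f \<alpha>) = i" using lt ge by simp
          then have "ev (f \<alpha>) X \<noteq> 0" using X fa by (auto simp: Bset_def)
          then show ?thesis using fev a by simp
        qed
        show "w X \<in> Bset \<Phi> p A i" using wXU nz by (auto simp: Bset_def Uset_def)
      qed
    next
      assume B: "w ` Bset \<Phi> p A i \<subseteq> Bset \<Phi> p A i"
      have BU: "Bset \<Phi> p A i \<subseteq> Uset \<Phi> p A i" by (auto simp: Bset_def Uset_def)
      show "w ` Uset \<Phi> p A i \<subseteq> Uset \<Phi> p A i"
      proof (rule image_subsetI)
        fix X assume X: "X \<in> Uset \<Phi> p A i"
        obtain t where t: "X + t *s A i \<in> Bset \<Phi> p A i" using perturb[OF i X finPhi] by blast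
        have Ai: "A i \<in> Bset \<Phi> p A i" using A_in_B i by blast
        have h1: "w (X + t *s A i) \<in> Uset \<Phi> p A i" using B t BU by blast
        have h2: "w (A i) \<in> Uset \<Phi> p A i" using B Ai BU by blast
        show "w X \<in> Uset \<Phi> p A i" unfolding Uset_def
        proof (intro CollectI ballI impI)
          fix \<alpha> assume a: "\<alpha> \<in> \<Phi>" "dd p A \<alpha> < i"
          have "ev \<alpha> (w X) = ev (f \<alpha>) X" using fev a by simp
          also have "\<dots> = ev (f \<alpha>) (X + t *s A i) - t * ev (f \<alpha>) (A i)"
            by (simp add: ev_add2 ev_scale2)
          also have "\<dots> = ev \<alpha> (w (X + t *s A i)) - t * ev \<alpha> (w (A i))" using fev a by simp
          also have "\<dots> = 0" using h1 h2 a by (simp add: Uset_def)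
          finally show "ev \<alpha> (w X) = 0" .
        qed
      qed
    qed
  qed
  have P1: "\<forall>i\<in>{1..p}. W i = Stab (W (i + 1)) (Bset \<Phi> p A i)"
  proof
    fix i assume i: "i \<in> {1..p}"
    have "W i = Stab (W (i + 1)) (Uset \<Phi> p A i)" using assms(4) i by blast
    also have "\<dots> = Stab (W (i + 1)) (Bset \<Phi> p A i)"
      unfolding Stab_def
    proof (rule Collect_cong)
      fix w
      show "(w \<in> W (i + 1) \<and> w ` Uset \<Phi> p A i \<subseteq> Uset \<Phi> p A i) =
            (w \<in> W (i + 1) \<and> w ` Bset \<Phi> p A i \<subseteq> Bset \<Phi> p A i)"
        using key[OF i, of w] by argo
    qed
    finally show "W i = Stab (W (i + 1)) (Bset \<Phi> p A i)" .
  qed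
  have toW1: "w \<in> W 1" if w: "w \<in> weyl_group \<Phi> cor" and wB: "\<forall>j\<in>{1..p}. w (A j) \<in> Bset \<Phi> p A j" for w
  proof -
    obtain f where fPhi: "f ` \<Phi> \<subseteq> \<Phi>"
      and fev: "\<forall>\<alpha>\<in>\<Phi>. \<forall>X. ev \<alpha> (w X) = ev (f \<alpha>) X"
      using weyl_phi[OF rd w] by blast
    have "k \<le> p \<Longrightarrow> w \<in> W (p+1-k)" for k
    proof (induction k)
      case 0 then show ?case using w assms(3) by simp
    next
      case (Suc k)
      define i where "i = p - k"
      have i: "i \<in> {1..p}" using Suc.prems i_def by simp
      have wi1: "w \<in> W (i+1)" using Suc i_def by (simp add: Suc_diff_le)
      have "w ` Uset \<Phi> p A i \<subseteq> Uset \<Phi> p A i"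
      proof (rule image_subsetI)
        fix X assume X: "X \<in> Uset \<Phi> p A i"
        show "w X \<in> Uset \<Phi> p A i" unfolding Uset_def
        proof (intro CollectI ballI impI)
          fix \<alpha> assume a: "\<alpha> \<in> \<Phi>" "dd p A \<alpha> < i"
          have fa: "f \<alpha> \<in> \<Phi>" using fPhi a by auto
          have "dd p A (f \<alpha>) < i"
          proof (rule ccontr)
            assume "\<not> dd p A (f \<alpha>) < i"
            then have ji: "i \<le> dd p A (f \<alpha>)" by simp
            then have "dd p A (f \<alpha>) \<ge> 1" using i by simp
            then have j: "dd p A (f \<alpha>) \<in> {1..p}" "ev (f \<alpha>) (A (dd p A (f \<alpha>))) \<noteq> 0"
              using dd_pos by blast+
            have "w (A (dd p A (f \<alpha>))) \<in> Bset \<Phi> p A (dd p A (f \<alpha>))" using wB j(1) by blast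
            then have "ev \<alpha> (w (A (dd p A (f \<alpha>)))) = 0" using a ji by (auto simp: Bset_def)
            then show False using fev a j(2) by simp
          qed
          then show "ev \<alpha> (w X) = 0" using X fa fev a by (auto simp: Uset_def)
        qed
      qed
      then have "w \<in> Stab (W (i + 1)) (Uset \<Phi> p A i)" using wi1 by (simp add: Stab_def)
      then have "w \<in> W i" using assms(4) i by blast
      then show ?case using i_def by simp
    qed
    from this[of p] show ?thesis by simp
  qed
  have P2: "(\<lambda>w. \<lambda>i\<in>{1..p}. w (A i)) ` weyl_group \<Phi> cor \<inter> PiE {1..p} (Bset \<Phi> p A)
           = (\<lambda>w. \<lambda>i\<in>{1..p}. w (A i)) ` W 1"
  proof
    show "(\<lambda>w. \<lambda>i\<in>{1..p}. w (A i)) ` weyl_group \<Phi> cor \<inter> PiE {1..p} (Bset \<Phi> p A)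
           \<subseteq> (\<lambda>w. \<lambda>i\<in>{1..p}. w (A i)) ` W 1"
    proof
      fix g assume g: "g \<in> (\<lambda>w. \<lambda>i\<in>{1..p}. w (A i)) ` weyl_group \<Phi> cor \<inter> PiE {1..p} (Bset \<Phi> p A)"
      then obtain w where w: "w \<in> weyl_group \<Phi> cor" and gw: "g = (\<lambda>i\<in>{1..p}. w (A i))" by blast
      have "\<forall>j\<in>{1..p}. w (A j) \<in> Bset \<Phi> p A j" using g gw by (auto simp: PiE_iff)
      then have "w \<in> W 1" using toW1 w by blast
      then show "g \<in> (\<lambda>w. \<lambda>i\<in>{1..p}. w (A i)) ` W 1" using gw by blast
    qed
  next
    show "(\<lambda>w. \<lambda>i\<in>{1..p}. w (A i)) ` W 1 \<subseteq>
      (\<lambda>w. \<lambda>i\<in>{1..p}. w (A i)) ` weyl_group \<Phi> cor \<inter> PiE {1..p} (Bset \<Phi> p A)"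
    proof
      fix g assume "g \<in> (\<lambda>w. \<lambda>i\<in>{1..p}. w (A i)) ` W 1"
      then obtain w where w: "w \<in> W 1" and gw: "g = (\<lambda>i\<in>{1..p}. w (A i))" by blast
      have "W 1 \<subseteq> weyl_group \<Phi> cor" using assms(2) by (intro Wweyl) simp
      then have ww: "w \<in> weyl_group \<Phi> cor" using w by (rule subsetD)
      have "w (A j) \<in> Bset \<Phi> p A j" if j: "j \<in> {1..p}" for j
      proof -
        have "W 1 \<subseteq> W j" using j by (intro Wchain) auto
        then have "w \<in> W j" using w by (rule subsetD)
        then have "w ` Bset \<Phi> p A j \<subseteq> Bset \<Phi> p A j" using P1 j by (auto simp: Stab_def)
        then show ?thesis using A_in_B[OF j] by blast
      qed
      then have "g \<in> PiE {1..p} (Bset \<Phi> p A)" using gw by (auto simp: PiE_iff)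
      then show "g \<in> (\<lambda>w. \<lambda>i\<in>{1..p}. w (A i)) ` weyl_group \<Phi> cor \<inter> PiE {1..p} (Bset \<Phi> p A)"
        using gw ww by blast
    qed
  qed
  show ?thesis using P1 P2 by blast
qed

end
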